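(* Let $\theta=(k_r)$ be a lacunary sequence, $m\ge0$ an integer, $p>0$ and $0<\beta\le1$. If $\limsup_r\frac{k_r}{k_{r-1}^\beta}<\infty$, then $N_\theta(p,F,\Delta^m)\subseteq w_p^\beta(F,\Delta^m)$.
   Context: A fuzzy number is a map $X:\mathbb{R}\to[0,1]$ which is normal, fuzzy convex, upper semicontinuous, with compact closure of $\{t:X(t)>0\}$; $L(\mathbb{R})$ is the set of fuzzy numbers. Level sets $[X]^\alpha=\{t:X(t)\ge\alpha\}$ ($\alpha\in(0,1]$), $[X]^0=\overline{\{t:X(t)>0\}}$, are compact intervals $[u^\alpha,v^\alpha]$. Subtraction: $[X-Y]^\alpha=[u_1^\alpha-v_2^\alpha,v_1^\alpha-u_2^\alpha]$. Metric: $d(X,Y)=\sup_{\alpha\in[0,1]}\max\{|u_1^\alpha-u_2^\alpha|,|v_1^\alpha-v_2^\alpha|\}$. $(\Delta^0X)_k=X_k$, $(\Delta^1X)_k=X_k-X_{k+1}$, $(\Delta^mX)_k=(\Delta^1(\Delta^{m-1}X))_k$. A lacunary sequence is an increasing integer sequence $\theta=(k_r)_{r\ge0}$ with $k_0=0$, $h_r=k_r-k_{r-1}\to\infty$; $I_r=(k_{r-1},k_r]$. $N_\theta(p,F,\Delta^m)$: sequences $X$ of fuzzy numbers with some $X_0\in L(\mathbb{R})$ such that $\lim_r\frac{1}{h_r}\sum_{k\in I_r}d(\Delta^mX_k,X_0)^p=0$. $w_p^\beta(F,\Delta^m)$: sequences $X$ with some $X_0\in L(\mathbb{R})$ such that $\lim_{n\to\infty}\frac{1}{n^\beta}\sum_{k=1}^n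 d(\Delta^mX_k,X_0)^p=0$. *)

theory Defs
  imports "HOL-Analysis.Analysis"
begin

type_synonym fuzzy = "real \<Rightarrow> real"

definition fuzzy_number :: "fuzzy \<Rightarrow> bool" where
  "fuzzy_number X \<longleftrightarrow>
     (\<forall>t. 0 \<le> X t \<and> X t \<le> 1) \<and>
     (\<exists>t. X t = 1) \<and>
     (\<forall>x y l. 0 \<le> l \<and> l \<le> 1 \<longrightarrow> X (l * x + (1 - l) * y) \<ge> min (X x) (X y)) \<and>
     (\<forall>t. \<forall>e>0. \<exists>d>0. \<forall>s. \<bar>s - t\<bar> < d \<longrightarrow> X s < X t + e) \<and>
     compact (closure {t. X t > 0})"

definition level :: "fuzzy \<Rightarrow> real \<Rightarrow> real set" where
  "level X a = (if a = 0 then closure {t. X t > 0} else {t. X t \<ge> a})"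

definition lower :: "fuzzy \<Rightarrow> real \<Rightarrow> real" where
  "lower X a = Inf (level X a)"

definition upper :: "fuzzy \<Rightarrow> real \<Rightarrow> real" where
  "upper X a = Sup (level X a)"

text \<open>Subtraction, defined as the fuzzy number whose level sets are
  [lower X a - upper Y a, upper X a - lower Y a].\<close>
definition fsub :: "fuzzy \<Rightarrow> fuzzy \<Rightarrow> fuzzy" where
  "fsub X Y z = Sup ({0} \<union> {a. 0 < a \<and> a \<le> 1 \<and>
       lower X a - upper Y a \<le> z \<and> z \<le> upper X a - lower Y a})"

definition fdist :: "fuzzy \<Rightarrow> fuzzy \<Rightarrow> real" where
  "fdist X Y = (SUP a\<in>{0..1}. max \<bar>lower X a - lower Y a\<bar> \<bar>upper X a - upper Y a\<bar>)"

fun fdelta :: "nat \<Rightarrow> (nat \<Rightarrow> fuzzy) \<Rightarrow> nat \<Rightarrow> fuzzy" where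
  "fdelta 0 X k = X k"
| "fdelta (Suc m) X k = fsub (fdelta m X k) (fdelta m X (Suc k))"

definition lacunary :: "(nat \<Rightarrow> nat) \<Rightarrow> bool" where
  "lacunary \<theta> \<longleftrightarrow> strict_mono \<theta> \<and> \<theta> 0 = 0 \<and>
     filterlim (\<lambda>r. \<theta> (Suc r) - \<theta> r) at_top sequentially"

text \<open>Sequences are indexed by k \<ge> 1 (index 0 is unused).\<close>
definition N_theta :: "(nat \<Rightarrow> nat) \<Rightarrow> real \<Rightarrow> nat \<Rightarrow> (nat \<Rightarrow> fuzzy) set" where
  "N_theta \<theta> p m = {X. (\<forall>k\<ge>1. fuzzy_number (X k)) \<and>
     (\<exists>X0. fuzzy_number X0 \<and>
       (\<lambda>r. (1 / real (\<theta> (Suc r) - \<theta> r)) *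
             (\<Sum>k\<in>{\<theta> r<..\<theta> (Suc r)}. fdist (fdelta m X k) X0 powr p))
       \<longlonglongrightarrow> 0)}"

definition w_beta :: "real \<Rightarrow> real \<Rightarrow> nat \<Rightarrow> (nat \<Rightarrow> fuzzy) set" where
  "w_beta p \<beta> m = {X. (\<forall>k\<ge>1. fuzzy_number (X k)) \<and>
     (\<exists>X0. fuzzy_number X0 \<and>
       (\<lambda>n. (1 / real n powr \<beta>) *
             (\<Sum>k=1..n. fdist (fdelta m X k) X0 powr p))
       \<longlonglongrightarrow> 0)}"

end

theory Submission
  imports Defs
begin

lemma find_block:
  assumes "strict_mono (\<theta>::nat\<Rightarrow>nat)" "\<theta> R1 < n"
  shows "\<exists>r\<ge>R1. \<theta> r < n \<and> n \<le> \<theta> (Suc r)"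
proof -
  define s where "s = (LEAST s. n \<le> \<theta> s)"
  have ex: "n \<le> \<theta> n" using seq_suble[OF assms(1)] .
  have s1: "n \<le> \<theta> s" unfolding s_def by (rule LeastI[of "\<lambda>s. n \<le> \<theta> s", OF ex])
  have "R1 < s"
  proof (rule ccontr)
    assume "\<not> R1 < s"
    then have "\<theta> s \<le> \<theta> R1" using assms(1) strict_mono_less_eq by fastforce
    with s1 assms(2) show False by simp
  qed
  then obtain r where r: "s = Suc r" "R1 \<le> r" by (cases s) auto
  have "\<not> n \<le> \<theta> r" unfolding s_def by (rule not_less_Least) (use r in \<open>simp add: s_def\<close>)
  with r s1 show ?thesis by auto
qed

lemma main:
  fixes a :: "nat \<Rightarrow> real" and \<theta> :: "nat \<Rightarrow> nat"
  assumes mono: "strict_mono \<theta>" and t0: "\<theta> 0 = 0" and nonneg: "\<And>k. a k \<ge> 0" and b: "0 < \<beta>"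
  and lim: "(\<lambda>r. (1 / real (\<theta> (Suc r) - \<theta> r)) * (\<Sum>k\<in>{\<theta> r<..\<theta> (Suc r)}. a k)) \<longlonglongrightarrow> 0"
  and Cb: "\<And>r. r \<ge> R0 \<Longrightarrow> real (\<theta> (Suc r)) / real (\<theta> r) powr \<beta> \<le> C"
  shows "(\<lambda>n. (1 / real n powr \<beta>) * (\<Sum>k=1..n. a k)) \<longlonglongrightarrow> 0"
proof (rule LIMSEQ_I)
  fix e :: real assume e: "e > 0"
  define C' where "C' = max C 0"
  have C'0: "C' \<ge> 0" unfolding C'_def by simp
  define \<epsilon> where "\<epsilon> = e / (2*(C'+1))"
  have \<epsilon>pos: "\<epsilon> > 0" unfolding \<epsilon>_def using e C'0 by simp
  have \<epsilon>C: "\<epsilon> * C' \<le> e/2" unfolding \<epsilon>_def using e C'0 by (simp add: field_simps)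
  define blk where "blk r = (\<Sum>k\<in>{\<theta> r<..\<theta> (Suc r)}. a k)" for r
  obtain R where R: "\<forall>r\<ge>R. norm ((1 / real (\<theta> (Suc r) - \<theta> r)) * blk r - 0) < \<epsilon>"
    using LIMSEQ_D[OF lim \<epsilon>pos] unfolding blk_def by blast
  have hpos: "\<And>r. \<theta> r < \<theta> (Suc r)" using mono by (simp add: strict_mono_def)
  have blkb: "blk r \<le> \<epsilon> * (real (\<theta> (Suc r)) - real (\<theta> r))" if "r \<ge> R" for r
  proof -
    have h: "real (\<theta> (Suc r) - \<theta> r) = real (\<theta> (Suc r)) - real (\<theta> r)"
      using hpos[of r] by (simp add: of_nat_diff)
    have hp: "real (\<theta> (Suc r)) - real (\<theta> r) > 0" using hpos[of r] by simp
    have "blk r / (real (\<theta> (Suc r)) - real (\<theta> r)) < \<epsilon>"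
    proof -
      have "\<bar>blk r\<bar> / real (\<theta> (Suc r) - \<theta> r) < \<epsilon>" using R that by auto
      then have "\<bar>blk r\<bar> / (real (\<theta> (Suc r)) - real (\<theta> r)) < \<epsilon>" by (simp only: h)
      moreover have "blk r \<le> \<bar>blk r\<bar>" by simp
      moreover have "blk r / (real (\<theta> (Suc r)) - real (\<theta> r)) \<le> \<bar>blk r\<bar> / (real (\<theta> (Suc r)) - real (\<theta> r))"
        using hp by (intro divide_right_mono) auto
      ultimately show ?thesis by linarith
    qed
    then show ?thesis using hp by (simp add: divide_less_eq mult.commute)
  qed
  define S where "S n = (\<Sum>k=1..n. a k)" for n
  have split: "S y = S x + (\<Sum>k\<in>{x<..y}. a k)" if "x \<le> y" for x y
  proof -
    have "{1..y} = {1..x} \<union> {x<..y}" using that by auto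
    then show ?thesis unfolding S_def by (simp add: sum.union_disjoint ivl_disj_int)
  qed
  have Smono: "S x \<le> S y" if "x \<le> y" for x y
    using split[OF that] sum_nonneg[of "{x<..y}" a] nonneg by simp
  have ind: "S (\<theta> r) \<le> S (\<theta> R) + \<epsilon> * (real (\<theta> r) - real (\<theta> R))" if "r \<ge> R" for r
    using that
  proof (induction r rule: dec_induct)
    case base then show ?case by simp
  next
    case (step r)
    have "S (\<theta> (Suc r)) = S (\<theta> r) + blk r"
      unfolding blk_def using split[of "\<theta> r" "\<theta> (Suc r)"] hpos[of r] by simp
    also have "\<dots> \<le> S (\<theta> R) + \<epsilon> * (real (\<theta> r) - real (\<theta> R)) + \<epsilon> * (real (\<theta> (Suc r)) - real (\<theta> r))"
      using step blkb[OF step(1)] by simp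
    finally show ?case by (simp add: algebra_simps)
  qed
  define K where "K = S (\<theta> R)"
  have K0: "K \<ge> 0" unfolding K_def S_def using nonneg by (simp add: sum_nonneg)
  have thr: "filterlim (\<lambda>r. real (\<theta> r)) at_top sequentially"
    using filterlim_compose[OF filterlim_real_sequentially filterlim_subseq[OF mono]]
    by (simp add: o_def)
  have "(\<lambda>r. real (\<theta> r) powr (-\<beta>)) \<longlonglongrightarrow> 0"
    using tendsto_neg_powr[OF _ thr, of "-\<beta>"] b by simp
  then have "(\<lambda>r. K * real (\<theta> r) powr (-\<beta>)) \<longlonglongrightarrow> 0"
    using tendsto_mult_right_zero by blast
  then obtain R2 where R2: "\<forall>r\<ge>R2. norm (K * real (\<theta> r) powr (-\<beta>) - 0) < e/2"
    using LIMSEQ_D[of _ 0 "e/2"] e by fastforce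
  define R1 where "R1 = max (max R R0) (max R2 1)"
  show "\<exists>no. \<forall>n\<ge>no. norm ((1 / real n powr \<beta>) * (\<Sum>k=1..n. a k) - 0) < e"
  proof (intro exI allI impI)
    fix n assume n: "n \<ge> Suc (\<theta> R1)"
    then obtain r where r: "r \<ge> R1" "\<theta> r < n" "n \<le> \<theta> (Suc r)"
      using find_block[OF mono, of R1 n] by auto
    have rR: "r \<ge> R" "r \<ge> R0" "r \<ge> R2" "r \<ge> 1" using r(1) unfolding R1_def by auto
    have tpos: "\<theta> r > 0" using strict_monoD[OF mono, of 0 r] rR(4) t0 by simp
    have tp: "real (\<theta> r) powr \<beta> > 0" using tpos by simp
    have np: "real (\<theta> r) powr \<beta> \<le> real n powr \<beta>"
      using r(2) b by (intro powr_mono2) auto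
    have Sn0: "S n \<ge> 0" unfolding S_def using nonneg by (simp add: sum_nonneg)
    have Sn: "S n \<le> K + \<epsilon> * real (\<theta> (Suc r))"
    proof -
      have "S n \<le> S (\<theta> (Suc r))" using Smono r(3) by simp
      also have "\<dots> \<le> K + \<epsilon> * (real (\<theta> (Suc r)) - real (\<theta> R))"
        using ind[of "Suc r"] rR(1) unfolding K_def by simp
      also have "\<dots> \<le> K + \<epsilon> * real (\<theta> (Suc r))" using \<epsilon>pos by simp
      finally show ?thesis .
    qed
    have "S n / real n powr \<beta> \<le> S n / real (\<theta> r) powr \<beta>"
    proof -
      have "real n powr \<beta> > 0" using r(2) by simp
      then show ?thesis using np tp Sn0 by (intro divide_left_mono) auto
    qed
    also have "\<dots> \<le> (K + \<epsilon> * real (\<theta> (Suc r))) / real (\<theta> r) powr \<beta>"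
      using Sn tp by (intro divide_right_mono) auto
    also have "\<dots> = K / real (\<theta> r) powr \<beta> + \<epsilon> * (real (\<theta> (Suc r)) / real (\<theta> r) powr \<beta>)"
      by (simp add: add_divide_distrib)
    also have "\<dots> < e/2 + e/2"
    proof -
      have "K / real (\<theta> r) powr \<beta> < e/2" proof -
        have "norm (K * real (\<theta> r) powr (-\<beta>) - 0) < e/2" using R2 rR(3) by blast
        moreover have "K * real (\<theta> r) powr (-\<beta>) \<le> norm (K * real (\<theta> r) powr (-\<beta>) - 0)" by simp
        moreover have "K / real (\<theta> r) powr \<beta> = K * real (\<theta> r) powr (-\<beta>)"
          by (simp add: powr_minus divide_inverse)
        ultimately show ?thesis by linarith
      qed
      moreover have "\<epsilon> * (real (\<theta> (Suc r)) / real (\<theta> r) powr \<beta>) \<le> \<epsilon> * C'"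
        using Cb[OF rR(2)] \<epsilon>pos unfolding C'_def
        by (intro mult_left_mono) auto
      ultimately show ?thesis using \<epsilon>C by linarith
    qed
    finally have "S n / real n powr \<beta> < e" by simp
    moreover have "S n / real n powr \<beta> \<ge> 0" using Sn0 by simp
    ultimately show "norm ((1 / real n powr \<beta>) * (\<Sum>k=1..n. a k) - 0) < e"
      unfolding S_def by simp
  qed
qed

theorem theorem2p15:
  fixes \<theta> :: "nat \<Rightarrow> nat" and m :: nat and p \<beta> :: real
  assumes "lacunary \<theta>" and "p > 0" and "0 < \<beta>" and "\<beta> \<le> 1"
    and "limsup (\<lambda>r. ereal (real (\<theta> (Suc r)) / real (\<theta> r) powr \<beta>)) < \<infinity>"
  shows "N_theta \<theta> p m \<subseteq> w_beta p \<beta> m"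
proof
  fix X assume X: "X \<in> N_theta \<theta> p m"
  have lac: "strict_mono \<theta>" "\<theta> 0 = 0" using assms(1) unfolding lacunary_def by auto
  obtain n :: nat where "limsup (\<lambda>r. ereal (real (\<theta> (Suc r)) / real (\<theta> r) powr \<beta>)) < ereal (real n)"
    using assms(5) less_PInf_Ex_of_nat by auto
  then have "eventually (\<lambda>r. ereal (real (\<theta> (Suc r)) / real (\<theta> r) powr \<beta>) < ereal (real n)) sequentially"
    by (rule Limsup_lessD)
  then obtain R0 where R0: "\<And>r. r \<ge> R0 \<Longrightarrow> real (\<theta> (Suc r)) / real (\<theta> r) powr \<beta> \<le> real n"
    unfolding eventually_sequentially by (metis ereal_less_eq(3) less_imp_le)
  from X obtain X0 where X0: "fuzzy_number X0"
    "(\<lambda>r. (1 / real (\<theta> (Suc r) - \<theta> r)) *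
             (\<Sum>k\<in>{\<theta> r<..\<theta> (Suc r)}. fdist (fdelta m X k) X0 powr p)) \<longlonglongrightarrow> 0"
    and fx: "\<forall>k\<ge>1. fuzzy_number (X k)"
    unfolding N_theta_def by auto
  have "(\<lambda>n. (1 / real n powr \<beta>) * (\<Sum>k=1..n. fdist (fdelta m X k) X0 powr p)) \<longlonglongrightarrow> 0"
    by (rule main[OF lac(1) lac(2) _ assms(3) X0(2) R0]) simp
  then show "X \<in> w_beta p \<beta> m" unfolding w_beta_def using fx X0(1) by auto
qed

end
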